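(* For every $n\ge 3$, let $G_n$ be the directed graph with nodes $0,1,\dots,n-1$ and arcs $i\to i+1$ for $0\le i\le n-2$ together with $j\to 1$ for $2\le j\le n-1$. Then $R(G_n)=1$.
   Context: $d_G(x,y)$ is the shortest directed path length from $x$ to $y$ ($\infty$ if none). The distance-count matrix $C_G\in\mathbb{R}^{n\times n}$ of a graph with $n$ nodes has $(C_G)_{i,k}=|\{j: d_G(j,i)=k\}|$. For $\mathbf a\in\mathbb{R}^{\mathbb{N}}$ (with $a_0$ arbitrary) the linear centrality is $f^{\mathbf a}_G(i)=\sum_{k=0}^{n-1}(C_G)_{i,k}a_k$. A permutation $\pi$ of $\{0,\dots,n-1\}$ is representable by $G$ if there is $\mathbf a\in\mathbb{R}^{\mathbb{N}}$ such that $f^{\mathbf a}_G(\pi(0))>f^{\mathbf a}_G(\pi(1))>\dots>f^{\mathbf a}_G(\pi(n-1))$. The representativeness of $G$ is $R(G)=|\{\pi\in S_n:\pi\text{ representable by }G\}|/n!$. *)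

theory Defs
  imports "HOL-Combinatorics.Permutations" "HOL-Library.Extended_Nat"
begin

text \<open>A directed graph on nodes 0,...,n-1 is given by n and an arc relation E
  (only arcs between nodes below n are relevant; graphs below only have such arcs).\<close>

inductive walk :: "(nat \<Rightarrow> nat \<Rightarrow> bool) \<Rightarrow> nat \<Rightarrow> nat \<Rightarrow> nat \<Rightarrow> bool"
  for E where
  walk_0: "walk E 0 x x"
| walk_step: "E x y \<Longrightarrow> walk E k y z \<Longrightarrow> walk E (Suc k) x z"

definition dist_G :: "(nat \<Rightarrow> nat \<Rightarrow> bool) \<Rightarrow> nat \<Rightarrow> nat \<Rightarrow> enat" where
  "dist_G E x y = (if \<exists>k. walk E k x y then enat (LEAST k. walk E k x y) else \<infinity>)"

definition dist_count :: "nat \<Rightarrow> (nat \<Rightarrow> nat \<Rightarrow> bool) \<Rightarrow> nat \<Rightarrow> nat \<Rightarrow> nat" where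
  "dist_count n E i k = card {j \<in> {0..<n}. dist_G E j i = enat k}"

definition lin_centrality :: "nat \<Rightarrow> (nat \<Rightarrow> nat \<Rightarrow> bool) \<Rightarrow> (nat \<Rightarrow> real) \<Rightarrow> nat \<Rightarrow> real" where
  "lin_centrality n E a i = (\<Sum>k<n. real (dist_count n E i k) * a k)"

definition representable :: "nat \<Rightarrow> (nat \<Rightarrow> nat \<Rightarrow> bool) \<Rightarrow> (nat \<Rightarrow> nat) \<Rightarrow> bool" where
  "representable n E \<pi> \<longleftrightarrow>
     (\<exists>a :: nat \<Rightarrow> real. \<forall>m. m + 1 < n \<longrightarrow>
        lin_centrality n E a (\<pi> m) > lin_centrality n E a (\<pi> (m + 1)))"

definition representativeness :: "nat \<Rightarrow> (nat \<Rightarrow> nat \<Rightarrow> bool) \<Rightarrow> real" where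
  "representativeness n E =
     real (card {\<pi>. \<pi> permutes {0..<n} \<and> representable n E \<pi>}) / real (fact n)"

definition G_arc :: "nat \<Rightarrow> nat \<Rightarrow> nat \<Rightarrow> bool" where
  "G_arc n i j \<longleftrightarrow> (i + 2 \<le> n \<and> j = i + 1) \<or> (2 \<le> i \<and> i \<le> n - 1 \<and> j = 1)"

end

theory Submission
  imports Defs
begin

definition DD :: "nat \<Rightarrow> nat \<Rightarrow> nat" where
  "DD x y = (if x = y then 0 else if 1 \<le> x \<and> x < y then y - x else y)"

lemma walk_lower:
  assumes "walk (G_arc n) k x y" "1 \<le> y"
  shows "DD x y \<le> k"
  using assms
proof (induction k x y rule: walk.induct)
  case (walk_0 x)
  then show ?case by (simp add: DD_def)
next
  case (walk_step x z k y)
  then have ih: "DD z y \<le> k" by simp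
  from walk_step.hyps(1) have "(x + 2 \<le> n \<and> z = x + 1) \<or> (2 \<le> x \<and> z = 1)"
    by (auto simp: G_arc_def)
  then show ?case
  proof
    assume "x + 2 \<le> n \<and> z = x + 1"
    then show ?thesis using ih walk_step.prems by (auto simp: DD_def split: if_splits)
  next
    assume "2 \<le> x \<and> z = 1"
    then show ?thesis using ih walk_step.prems by (auto simp: DD_def split: if_splits)
  qed
qed

lemma walk_zero:
  assumes "walk (G_arc n) k x y" "y = 0"
  shows "x = 0"
  using assms
  by (induction k x y rule: walk.induct) (auto simp: G_arc_def)

lemma walk_concat:
  assumes "walk E k x y" "walk E m y z"
  shows "walk E (k + m) x z"
  using assms
  by (induction k x y rule: walk.induct) (auto intro: walk.intros)

lemma walk_up_aux:
  "\<forall>x. x + d = y \<longrightarrow> y < n \<longrightarrow> walk (G_arc n) d x y"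
proof (induction d)
  case 0
  then show ?case by (auto intro: walk_0)
next
  case (Suc d)
  show ?case
  proof (intro allI impI)
    fix x assume h: "x + Suc d = y" "y < n"
    have "walk (G_arc n) d (x+1) y" using Suc h by auto
    moreover have "G_arc n x (x+1)" using h by (simp add: G_arc_def)
    ultimately show "walk (G_arc n) (Suc d) x y" by (rule walk_step[rotated])
  qed
qed

lemma walk_up:
  assumes "x \<le> y" "y < n"
  shows "walk (G_arc n) (y - x) x y"
  using walk_up_aux[of "y - x" y n] assms by auto

lemma walk_DD:
  assumes "x < n" "1 \<le> y" "y < n"
  shows "walk (G_arc n) (DD x y) x y"
proof (cases "x = y")
  case True
  then show ?thesis by (simp add: DD_def walk_0)
next
  case False
  show ?thesis
  proof (cases "1 \<le> x \<and> x < y")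
    case True
    then show ?thesis using False walk_up[of x y n] assms by (simp add: DD_def)
  next
    case nt: False
    show ?thesis
    proof (cases "x = 0")
      case True
      then show ?thesis using False walk_up[of x y n] assms by (simp add: DD_def)
    next
      case x0: False
      then have xy: "x > y" "2 \<le> x" using nt False assms by auto
      have "G_arc n x 1" using xy assms by (simp add: G_arc_def)
      moreover have "walk (G_arc n) (y - 1) 1 y" using walk_up[of 1 y n] assms by simp
      ultimately have "walk (G_arc n) (Suc (y - 1)) x y" by (rule walk_step)
      then show ?thesis using xy False nt assms by (simp add: DD_def)
    qed
  qed
qed

lemma dist_DD:
  assumes "x < n" "1 \<le> y" "y < n"
  shows "dist_G (G_arc n) x y = enat (DD x y)"
proof -
  have w: "walk (G_arc n) (DD x y) x y" using walk_DD assms by blast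
  have "(LEAST k. walk (G_arc n) k x y) = DD x y"
    by (rule Least_equality[where P="\<lambda>k. walk (G_arc n) k x y", OF w]) (use walk_lower assms in blast)
  then show ?thesis using w unfolding dist_G_def by auto
qed

lemma dist_0:
  "dist_G (G_arc n) x 0 = (if x = 0 then enat 0 else \<infinity>)"
proof (cases "x = 0")
  case True
  have w: "walk (G_arc n) 0 0 0" by (rule walk_0)
  have "(LEAST k. walk (G_arc n) k 0 0) = 0" by (rule Least_equality[where P="\<lambda>k. walk (G_arc n) k 0 0", OF w]) auto
  then show ?thesis using True w unfolding dist_G_def by auto
next
  case False
  then show ?thesis using walk_zero unfolding dist_G_def by fastforce
qed

lemma DD_less: "1 \<le> y \<Longrightarrow> y < n \<Longrightarrow> DD x y < n"
  by (auto simp: DD_def)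

lemma card_as_sum:
  fixes n :: nat
  shows "real (card {j \<in> {0..<n}. P j}) * c = (\<Sum>j\<in>{0..<n}. if P j then c else 0)"
proof -
  have "real (card {j \<in> {0..<n}. P j}) = (\<Sum>j\<in>{j \<in> {0..<n}. P j}. 1)" by simp
  also have "\<dots> = (\<Sum>j\<in>{0..<n}. if P j then 1 else 0)"
    using sum.inter_filter[of "{0..<n}" "\<lambda>_. 1::real" P] by simp
  finally show ?thesis by (auto simp: sum_distrib_right intro!: sum.cong)
qed

lemma lc_swap:
  "lin_centrality n E a i = (\<Sum>j\<in>{0..<n}. \<Sum>k<n. if dist_G E j i = enat k then a k else 0)"
  unfolding lin_centrality_def dist_count_def card_as_sum
  by (rule sum.swap)

lemma lc_0:
  assumes "n \<ge> 1"
  shows "lin_centrality n (G_arc n) a 0 = a 0"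
proof -
  have "lin_centrality n (G_arc n) a 0 =
      (\<Sum>j\<in>{0..<n}. if j = 0 then a 0 else 0)"
    unfolding lc_swap dist_0
    by (rule sum.cong) (auto simp: zero_enat_def assms)
  also have "\<dots> = a 0" using assms by simp
  finally show ?thesis .
qed

lemma lc_pos1:
  assumes "1 \<le> i" "i < n"
  shows "lin_centrality n (G_arc n) a i = (\<Sum>j\<in>{0..<n}. a (DD j i))"
  unfolding lc_swap
proof (rule sum.cong)
  fix x assume "x \<in> {0..<n}"
  then have "dist_G (G_arc n) x i = enat (DD x i)" using dist_DD assms by simp
  then show "(\<Sum>k<n. if dist_G (G_arc n) x i = enat k then a k else 0) = a (DD x i)"
    using DD_less[of i n x] assms by simp
qed simp

lemma sum_DD:
  assumes "1 \<le> i" "i < n"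
  shows "(\<Sum>j\<in>{0..<n}. a (DD j i)) = (\<Sum>k<i. a k) + real (n - i) * a i"
proof -
  have split: "(\<Sum>j\<in>{0..<n}. a (DD j i)) =
      (\<Sum>j\<in>{0..<Suc i}. a (DD j i)) + (\<Sum>j\<in>{Suc i..<n}. a (DD j i))"
    using assms sum.atLeastLessThan_concat[of 0 "Suc i" n "\<lambda>j. a (DD j i)"] by (simp del: sum.op_ivl_Suc)
  have hi: "(\<Sum>j\<in>{Suc i..<n}. a (DD j i)) = real (n - Suc i) * a i"
  proof -
    have "(\<Sum>j\<in>{Suc i..<n}. a (DD j i)) = (\<Sum>j\<in>{Suc i..<n}. a i)"
      by (rule sum.cong) (auto simp: DD_def)
    then show ?thesis by simp
  qed
  have lo: "(\<Sum>j\<in>{0..<Suc i}. a (DD j i)) = a i + (\<Sum>j\<in>{Suc 0..<Suc i}. a (i - j))"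
  proof -
    have "(\<Sum>j\<in>{0..<Suc i}. a (DD j i)) = a (DD 0 i) + (\<Sum>j\<in>{Suc 0..<Suc i}. a (DD j i))"
      by (simp add: sum.atLeast_Suc_lessThan)
    also have "(\<Sum>j\<in>{Suc 0..<Suc i}. a (DD j i)) = (\<Sum>j\<in>{Suc 0..<Suc i}. a (i - j))"
      by (rule sum.cong) (auto simp: DD_def)
    finally show ?thesis using assms by (simp add: DD_def)
  qed
  have re: "(\<Sum>j\<in>{Suc 0..<Suc i}. a (i - j)) = (\<Sum>k<i. a k)"
    by (rule sum.reindex_bij_witness[where i="\<lambda>k. i - k" and j="\<lambda>j. i - j"]) auto
  have "real (n - i) = 1 + real (n - Suc i)" using assms by simp
  then show ?thesis using split hi lo re by (simp add: algebra_simps)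
qed

primrec ps :: "nat \<Rightarrow> (nat \<Rightarrow> real) \<Rightarrow> nat \<Rightarrow> real" where
  "ps n t 0 = 0"
| "ps n t (Suc i) = ps n t i + (if i = 0 then t 0 else (t i - ps n t i) / real (n - i))"

lemma solve:
  assumes "n \<ge> 1" "i < n"
  shows "lin_centrality n (G_arc n) (\<lambda>k. ps n t (Suc k) - ps n t k) i = t i"
proof (cases "i = 0")
  case True
  then show ?thesis using assms lc_0 by simp
next
  case False
  let ?a = "\<lambda>k. ps n t (Suc k) - ps n t k"
  have tel: "(\<Sum>k<i. ?a k) = ps n t i"
    using sum_lessThan_telescope[of "ps n t" i] by (simp del: ps.simps(2))
  have pos: "real (n - i) > 0" using assms by simp
  have "lin_centrality n (G_arc n) ?a i = ps n t i + real (n - i) * ?a i"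
    using lc_pos1 sum_DD tel False assms by simp
  also have "\<dots> = t i" using False pos by simp
  finally show ?thesis .
qed

lemma all_repr:
  assumes "n \<ge> 1" "p permutes {0..<n}"
  shows "representable n (G_arc n) p"
  unfolding representable_def
proof (intro exI allI impI)
  fix m assume m: "m + 1 < n"
  let ?t = "\<lambda>i. - real (inv p i)"
  have inv: "\<And>x. inv p (p x) = x" using permutes_inverses(2)[OF assms(2)] by simp
  have r: "\<And>x. x < n \<Longrightarrow> p x < n" using permutes_in_image[OF assms(2)] by simp
  show "lin_centrality n (G_arc n) (\<lambda>k. ps n ?t (Suc k) - ps n ?t k) (p m) >
        lin_centrality n (G_arc n) (\<lambda>k. ps n ?t (Suc k) - ps n ?t k) (p (m + 1))"
    using solve[OF assms(1) r, of m ?t] solve[OF assms(1) r, of "m+1" ?t] m inv by simp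
qed

theorem theorem5:
  fixes n :: nat
  assumes "n \<ge> 3"
  shows "representativeness n (G_arc n) = 1"
proof -
  have "{\<pi>. \<pi> permutes {0..<n} \<and> representable n (G_arc n) \<pi>} = {\<pi>. \<pi> permutes {0..<n}}"
    using all_repr[of n] assms by auto
  moreover have "card {\<pi>. \<pi> permutes {0..<n}} = fact n"
    by (rule card_permutations) auto
  ultimately show ?thesis unfolding representativeness_def by simp
qed

end
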